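(* Let $p$ be a design and let $\Omega\subseteq\{0,1\}^n$ be the set of treatment vectors it assigns positive probability, $m=|\Omega|$. Each unit $i$ has exposure levels $\{0,\dots,K_i-1\}$ given by $e_i=f(\mathbf z_{N_i})$ and potential outcomes $Y_i(z,e)$. Fix $(z_1,e_1)\ne(z_0,e_0)$ and let $\theta=\frac1n\sum_i\big(Y_i(z_1,e_1)-Y_i(z_0,e_0)\big)$, and $\pi_i(z,e)=P(Z_i=z,f(\mathbf Z_{N_i})=e)$. If for each $i$ we have $m>2K_i$ and $0<\pi_i(z_1,e_1)<1$, $0<\pi_i(z_0,e_0)<1$, then there are infinitely many estimators of the form $\hat\theta=\sum_iw_i(\mathbf Z)Y_i^{obs}$, with weight functions $w_i:\Omega\to\mathbb R$, that satisfy $\mathbb E[\hat\theta]=\theta$ for every choice of the real numbers $\{Y_i(z,e)\}$.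
   Context: Units $1,\dots,n$ each have an interference neighborhood $N_i\subseteq\{1,\dots,n\}\setminus\{i\}$ and exposure function $f$ mapping $\{0,1\}^{N_i}$ onto $\{0,\dots,K_i-1\}$. The observed outcome is $Y_i^{obs}=Y_i(Z_i,f(\mathbf Z_{N_i}))$. *)

theory Defs
  imports Complex_Main
begin

text \<open>Units are 0,...,n-1. A treatment vector in {0,1}^n is a function
 nat => bool that is False outside {..<n}.\<close>
definition treatments :: "nat \<Rightarrow> (nat \<Rightarrow> bool) set" where
  "treatments n = {z. \<forall>i. n \<le> i \<longrightarrow> \<not> z i}"

definition is_design :: "nat \<Rightarrow> ((nat \<Rightarrow> bool) \<Rightarrow> real) \<Rightarrow> bool" where
  "is_design n p \<longleftrightarrow> (\<forall>z\<in>treatments n. 0 \<le> p z) \<and> (\<Sum>z\<in>treatments n. p z) = 1"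

definition support :: "nat \<Rightarrow> ((nat \<Rightarrow> bool) \<Rightarrow> real) \<Rightarrow> (nat \<Rightarrow> bool) set" where
  "support n p = {z \<in> treatments n. 0 < p z}"

definition exposure_mapping ::
  "nat \<Rightarrow> (nat \<Rightarrow> nat set) \<Rightarrow> nat \<Rightarrow> ((nat \<Rightarrow> bool) \<Rightarrow> nat) \<Rightarrow> nat \<Rightarrow> bool" where
  "exposure_mapping n N i fi Ki \<longleftrightarrow>
     N i \<subseteq> {..<n} - {i} \<and>
     (\<forall>z z'. (\<forall>j\<in>N i. z j = z' j) \<longrightarrow> fi z = fi z') \<and>
     fi ` treatments n = {..<Ki}"

definition expo_prob ::
  "nat \<Rightarrow> ((nat \<Rightarrow> bool) \<Rightarrow> real) \<Rightarrow> (nat \<Rightarrow> (nat \<Rightarrow> bool) \<Rightarrow> nat) \<Rightarrow> nat \<Rightarrow> bool \<Rightarrow> nat \<Rightarrow> real" where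
  "expo_prob n p f i a e = (\<Sum>z\<in>{z\<in>support n p. z i = a \<and> f i z = e}. p z)"

definition Yobs :: "(nat \<Rightarrow> bool \<Rightarrow> nat \<Rightarrow> real) \<Rightarrow> (nat \<Rightarrow> (nat \<Rightarrow> bool) \<Rightarrow> nat) \<Rightarrow> nat \<Rightarrow> (nat \<Rightarrow> bool) \<Rightarrow> real" where
  "Yobs Y f i z = Y i (z i) (f i z)"

definition est_expect ::
  "nat \<Rightarrow> ((nat \<Rightarrow> bool) \<Rightarrow> real) \<Rightarrow> (nat \<Rightarrow> (nat \<Rightarrow> bool) \<Rightarrow> nat) \<Rightarrow> (nat \<Rightarrow> (nat \<Rightarrow> bool) \<Rightarrow> real)
    \<Rightarrow> (nat \<Rightarrow> bool \<Rightarrow> nat \<Rightarrow> real) \<Rightarrow> real" where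
  "est_expect n p f w Y = (\<Sum>z\<in>support n p. p z * (\<Sum>i<n. w i z * Yobs Y f i z))"

definition estimand :: "nat \<Rightarrow> (nat \<Rightarrow> bool \<Rightarrow> nat \<Rightarrow> real) \<Rightarrow> bool \<Rightarrow> nat \<Rightarrow> bool \<Rightarrow> nat \<Rightarrow> real" where
  "estimand n Y z1 e1 z0 e0 = (1 / real n) * (\<Sum>i<n. Y i z1 e1 - Y i z0 e0)"

end

theory Submission
  imports Defs
begin

lemma cell_sum:
  fixes p :: "'a \<Rightarrow> real" and Y :: "'b \<Rightarrow> 'c \<Rightarrow> real"
  assumes "finite S"
  shows "(\<Sum>z\<in>S. p z * (if g z = a \<and> h z = e then c else 0) * Y (g z) (h z))
       = c * Y a e * (\<Sum>z\<in>{z\<in>S. g z = a \<and> h z = e}. p z)"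
proof -
  have "(\<Sum>z\<in>S. p z * (if g z = a \<and> h z = e then c else 0) * Y (g z) (h z))
      = (\<Sum>z\<in>S. if g z = a \<and> h z = e then c * Y a e * p z else 0)"
    by (rule sum.cong) auto
  also have "\<dots> = (\<Sum>z\<in>{z\<in>S. g z = a \<and> h z = e}. c * Y a e * p z)"
    using assms by (simp add: sum.inter_filter)
  also have "\<dots> = c * Y a e * (\<Sum>z\<in>{z\<in>S. g z = a \<and> h z = e}. p z)"
    by (simp add: sum_distrib_left)
  finally show ?thesis .
qed

theorem proposition17:
  fixes n :: nat and p :: "(nat \<Rightarrow> bool) \<Rightarrow> real"
    and N :: "nat \<Rightarrow> nat set" and f :: "nat \<Rightarrow> (nat \<Rightarrow> bool) \<Rightarrow> nat" and K :: "nat \<Rightarrow> nat"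
    and z1 z0 :: bool and e1 e0 :: nat
  assumes "0 < n"
    and "is_design n p"
    and "\<And>i. i < n \<Longrightarrow> exposure_mapping n N i (f i) (K i)"
    and "(z1, e1) \<noteq> (z0, e0)"
    and "\<And>i. i < n \<Longrightarrow> card (support n p) > 2 * K i"
    and "\<And>i. i < n \<Longrightarrow> 0 < expo_prob n p f i z1 e1 \<and> expo_prob n p f i z1 e1 < 1"
    and "\<And>i. i < n \<Longrightarrow> 0 < expo_prob n p f i z0 e0 \<and> expo_prob n p f i z0 e0 < 1"
  shows "infinite {w :: nat \<Rightarrow> (nat \<Rightarrow> bool) \<Rightarrow> real.
            (\<forall>i z. (n \<le> i \<or> z \<notin> support n p) \<longrightarrow> w i z = 0) \<and>
            (\<forall>Y. est_expect n p f w Y = estimand n Y z1 e1 z0 e0)}"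
proof -
  define S where "S = support n p"
  have cS: "card S > 2 * K 0" using assms(5)[OF assms(1)] S_def by simp
  hence finS: "finite S" by (metis card.infinite not_less_zero)
  have ppos: "\<And>z. z \<in> S \<Longrightarrow> 0 < p z" by (simp add: S_def support_def)
  define g where "g z = (z (0::nat), f 0 z)" for z
  have gimg: "g ` S \<subseteq> UNIV \<times> {..<K 0}"
  proof
    fix x assume "x \<in> g ` S"
    then obtain z where z: "z \<in> S" "x = g z" by auto
    have "z \<in> treatments n" using z S_def support_def by auto
    hence "f 0 z \<in> {..<K 0}" using assms(3)[OF assms(1)] unfolding exposure_mapping_def by blast
    thus "x \<in> UNIV \<times> {..<K 0}" using z g_def by auto
  qed
  have "\<not> inj_on g S"
  proof
    assume "inj_on g S"
    hence "card S \<le> card (UNIV \<times> {..<K 0} :: (bool \<times> nat) set)"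
      using gimg by (intro card_inj_on_le) auto
    also have "\<dots> = 2 * K 0" by (simp add: card_cartesian_product)
    finally show False using cS by simp
  qed
  then obtain u v where uv: "u \<in> S" "v \<in> S" "u \<noteq> v" "g u = g v"
    unfolding inj_on_def by blast
  have puv: "p u > 0" "p v > 0" using uv ppos by auto
  define pr where "pr i a e = expo_prob n p f i a e" for i a e
  define b where "b i z = (if z i = z1 \<and> f i z = e1 then 1 / (real n * pr i z1 e1) else 0)
      - (if z i = z0 \<and> f i z = e0 then 1 / (real n * pr i z0 e0) else 0)" for i z
  define d where "d z = (if z = u then 1 / p u else 0) - (if z = v then 1 / p v else 0)" for z
  define W where "W t i z = (if i < n \<and> z \<in> S then b i z + (if i = 0 then t * d z else 0) else 0)"
    for t :: real and i z
  have bsum: "(\<Sum>z\<in>S. p z * b i z * Y i (z i) (f i z)) = (Y i z1 e1 - Y i z0 e0) / real n"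
    if "i < n" for i Y
  proof -
    have pr1: "pr i z1 e1 = (\<Sum>z\<in>{z\<in>S. z i = z1 \<and> f i z = e1}. p z)"
      by (simp add: pr_def expo_prob_def S_def)
    have pr0: "pr i z0 e0 = (\<Sum>z\<in>{z\<in>S. z i = z0 \<and> f i z = e0}. p z)"
      by (simp add: pr_def expo_prob_def S_def)
    have n1: "pr i z1 e1 \<noteq> 0" "pr i z0 e0 \<noteq> 0" using assms(6,7)[OF that] pr_def by auto
    have "(\<Sum>z\<in>S. p z * b i z * Y i (z i) (f i z))
       = (\<Sum>z\<in>S. p z * (if z i = z1 \<and> f i z = e1 then 1 / (real n * pr i z1 e1) else 0) * Y i (z i) (f i z))
       - (\<Sum>z\<in>S. p z * (if z i = z0 \<and> f i z = e0 then 1 / (real n * pr i z0 e0) else 0) * Y i (z i) (f i z))"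
      unfolding b_def by (simp add: algebra_simps sum_subtractf)
    also have "\<dots> = 1 / (real n * pr i z1 e1) * Y i z1 e1 * pr i z1 e1
        - 1 / (real n * pr i z0 e0) * Y i z0 e0 * pr i z0 e0"
      using cell_sum[OF finS, of p "\<lambda>z. z i" z1 "f i" e1 _ "Y i"]
            cell_sum[OF finS, of p "\<lambda>z. z i" z0 "f i" e0 _ "Y i"] pr1 pr0 by simp
    also have "\<dots> = (Y i z1 e1 - Y i z0 e0) / real n" using n1 assms(1) by (simp add: field_simps)
    finally show ?thesis .
  qed
  have dsum: "(\<Sum>z\<in>S. p z * d z * Y 0 (z 0) (f 0 z)) = 0" for Y
  proof -
    have "(\<Sum>z\<in>S. p z * d z * Y 0 (z 0) (f 0 z))
       = (\<Sum>z\<in>S. if z = u then Y 0 (u 0) (f 0 u) else 0) - (\<Sum>z\<in>S. if z = v then Y 0 (v 0) (f 0 v) else 0)"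
      unfolding d_def sum_subtractf[symmetric]
      by (rule sum.cong) (use puv uv(3) in auto)
    also have "\<dots> = 0" using uv finS g_def by simp
    finally show ?thesis .
  qed
  have good: "W t \<in> {w :: nat \<Rightarrow> (nat \<Rightarrow> bool) \<Rightarrow> real.
            (\<forall>i z. (n \<le> i \<or> z \<notin> support n p) \<longrightarrow> w i z = 0) \<and>
            (\<forall>Y. est_expect n p f w Y = estimand n Y z1 e1 z0 e0)}" for t
  proof -
    have "est_expect n p f (W t) Y = estimand n Y z1 e1 z0 e0" for Y
    proof -
      have "est_expect n p f (W t) Y = (\<Sum>z\<in>S. \<Sum>i<n. p z * W t i z * Y i (z i) (f i z))"
        unfolding est_expect_def S_def[symmetric] Yobs_def
        by (simp add: sum_distrib_left mult.assoc)
      also have "\<dots> = (\<Sum>i<n. \<Sum>z\<in>S. p z * W t i z * Y i (z i) (f i z))"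
        by (rule sum.swap)
      also have "\<dots> = (\<Sum>i<n. (\<Sum>z\<in>S. p z * b i z * Y i (z i) (f i z))
           + (if i = 0 then t * (\<Sum>z\<in>S. p z * d z * Y 0 (z 0) (f 0 z)) else 0))"
      proof (rule sum.cong[OF refl])
        fix i assume i: "i \<in> {..<n}"
        have "(\<Sum>z\<in>S. p z * W t i z * Y i (z i) (f i z))
           = (\<Sum>z\<in>S. p z * b i z * Y i (z i) (f i z)
              + (if i = 0 then t * (p z * d z * Y 0 (z 0) (f 0 z)) else 0))"
          by (rule sum.cong) (use i in \<open>auto simp: W_def algebra_simps\<close>)
        also have "\<dots> = (\<Sum>z\<in>S. p z * b i z * Y i (z i) (f i z))
           + (if i = 0 then t * (\<Sum>z\<in>S. p z * d z * Y 0 (z 0) (f 0 z)) else 0)"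
          by (simp add: sum.distrib sum_distrib_left)
        finally show "(\<Sum>z\<in>S. p z * W t i z * Y i (z i) (f i z))
           = (\<Sum>z\<in>S. p z * b i z * Y i (z i) (f i z))
           + (if i = 0 then t * (\<Sum>z\<in>S. p z * d z * Y 0 (z 0) (f 0 z)) else 0)" .
      qed
      also have "\<dots> = (\<Sum>i<n. (Y i z1 e1 - Y i z0 e0) / real n)"
        by (rule sum.cong[OF refl]) (simp add: bsum dsum[of Y])
      also have "\<dots> = estimand n Y z1 e1 z0 e0"
        unfolding estimand_def by (simp add: sum_divide_distrib)
      finally show ?thesis .
    qed
    moreover have "\<forall>i z. (n \<le> i \<or> z \<notin> support n p) \<longrightarrow> W t i z = 0"
      by (auto simp: W_def S_def)
    ultimately show ?thesis by simp
  qed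
  have inj: "inj W"
  proof (rule injI)
    fix s t assume "W s = W t"
    hence "W s 0 u = W t 0 u" by simp
    hence "s * (1 / p u) = t * (1 / p u)" using uv assms(1) by (simp add: W_def d_def)
    thus "s = t" using puv by simp
  qed
  have "infinite (range W)"
    using inj infinite_UNIV_char_0 finite_imageD by blast
  moreover have "range W \<subseteq> {w :: nat \<Rightarrow> (nat \<Rightarrow> bool) \<Rightarrow> real.
            (\<forall>i z. (n \<le> i \<or> z \<notin> support n p) \<longrightarrow> w i z = 0) \<and>
            (\<forall>Y. est_expect n p f w Y = estimand n Y z1 e1 z0 e0)}"
    using good by blast
  ultimately show ?thesis using finite_subset by blast
qed

end
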